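(* For every hypergraph $\mathcal{H}=(Q,\mathcal{S})$ with all hyperedges nonempty and $S_n=Q$, the graph $G_{\mathcal{H}}$ is $(2P_1+2P_2)$-free, $3P_2$-free and $2P_3$-free.
   Context: A hypergraph $\mathcal{H}=(Q,\mathcal{S})$ has element set $Q=\{q_1,\dots,q_m\}$ and hyperedges $\mathcal{S}=\{S_1,\dots,S_n\}$, $S_j\subseteq Q$. The graph $G_{\mathcal{H}}$ has vertex set $Q\cup\mathcal{S}\cup\mathcal{S}'\cup\{t_1,t_2\}$, where $\mathcal{S}'=\{S_1',\dots,S_n'\}$ is a set of $n$ new vertices, and edges: $q_iS_j$ and $q_iS_j'$ whenever $q_i\in S_j$; $S_jS_\ell'$ for all $j,\ell\in\{1,\dots,n\}$; $q_hq_i$ for all distinct $h,i$ (so $Q$ is a clique); $t_1S_j$ and $t_2S_j'$ for all $j$. There are no other edges. $+$ denotes disjoint union, $sG$ the disjoint union of $s$ copies of $G$, $P_r$ the path on $r$ vertices; $H$-free means no induced subgraph isomorphic to $H$. *)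

theory Defs
  imports Main
begin

type_synonym 'a graph = "'a set \<times> ('a \<Rightarrow> 'a \<Rightarrow> bool)"

definition path_graph :: "nat \<Rightarrow> nat graph" where
  "path_graph r = ({0..<r}, \<lambda>i j. i + 1 = j \<or> j + 1 = i)"

definition gunion :: "'a graph \<Rightarrow> 'b graph \<Rightarrow> ('a + 'b) graph" where
  "gunion G H = (Inl ` fst G \<union> Inr ` fst H,
     \<lambda>x y. case (x, y) of
        (Inl a, Inl b) \<Rightarrow> snd G a b
      | (Inr a, Inr b) \<Rightarrow> snd H a b
      | _ \<Rightarrow> False)"

definition has_induced :: "'a graph \<Rightarrow> 'b graph \<Rightarrow> bool" where
  "has_induced G H \<longleftrightarrow> (\<exists>f. inj_on f (fst H) \<and> f ` fst H \<subseteq> fst G \<and>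
     (\<forall>u\<in>fst H. \<forall>v\<in>fst H. u \<noteq> v \<longrightarrow> (snd H u v \<longleftrightarrow> snd G (f u) (f v))))"

definition H_free :: "'b graph \<Rightarrow> 'a graph \<Rightarrow> bool" where
  "H_free H G \<longleftrightarrow> \<not> has_induced G H"

datatype 'a vtx = QV 'a | SV nat | SV' nat | T1 | T2

text \<open>Hypergraph with element set Q and hyperedges S 1, ..., S n.\<close>
definition GH_base :: "'a set \<Rightarrow> (nat \<Rightarrow> 'a set) \<Rightarrow> nat \<Rightarrow> 'a vtx \<Rightarrow> 'a vtx \<Rightarrow> bool" where
  "GH_base Q S n x y = (case (x, y) of
      (QV a, SV j) \<Rightarrow> a \<in> Q \<and> j \<in> {1..n} \<and> a \<in> S j
    | (QV a, SV' j) \<Rightarrow> a \<in> Q \<and> j \<in> {1..n} \<and> a \<in> S j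
    | (SV j, SV' l) \<Rightarrow> j \<in> {1..n} \<and> l \<in> {1..n}
    | (QV a, QV b) \<Rightarrow> a \<in> Q \<and> b \<in> Q \<and> a \<noteq> b
    | (T1, SV j) \<Rightarrow> j \<in> {1..n}
    | (T2, SV' j) \<Rightarrow> j \<in> {1..n}
    | _ \<Rightarrow> False)"

definition G_hyp :: "'a set \<Rightarrow> (nat \<Rightarrow> 'a set) \<Rightarrow> nat \<Rightarrow> 'a vtx graph" where
  "G_hyp Q S n = (QV ` Q \<union> SV ` {1..n} \<union> SV' ` {1..n} \<union> {T1, T2},
     \<lambda>x y. GH_base Q S n x y \<or> GH_base Q S n y x)"

end

theory Submission imports Defs begin

definition Ix :: "nat \<Rightarrow> nat set" where "Ix n = {1..n}"

lemma adj_simps:   "snd (G_hyp Q S n) (QV a) (QV b) \<longleftrightarrow> (a \<in> Q \<and> b \<in> Q \<and> a \<noteq> b) \<or> (b \<in> Q \<and> a \<in> Q \<and> b \<noteq> a)"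
  "snd (G_hyp Q S n) (QV a) (SV l) \<longleftrightarrow> (a \<in> Q \<and> l \<in> Ix n \<and> a \<in> S l)"
  "snd (G_hyp Q S n) (QV a) (SV' l) \<longleftrightarrow> (a \<in> Q \<and> l \<in> Ix n \<and> a \<in> S l)"
  "snd (G_hyp Q S n) (QV a) (T1) \<longleftrightarrow> False"
  "snd (G_hyp Q S n) (QV a) (T2) \<longleftrightarrow> False"
  "snd (G_hyp Q S n) (SV j) (QV b) \<longleftrightarrow> (b \<in> Q \<and> j \<in> Ix n \<and> b \<in> S j)"
  "snd (G_hyp Q S n) (SV j) (SV l) \<longleftrightarrow> False"
  "snd (G_hyp Q S n) (SV j) (SV' l) \<longleftrightarrow> (j \<in> Ix n \<and> l \<in> Ix n)"
  "snd (G_hyp Q S n) (SV j) (T1) \<longleftrightarrow> (j \<in> Ix n)"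
  "snd (G_hyp Q S n) (SV j) (T2) \<longleftrightarrow> False"
  "snd (G_hyp Q S n) (SV' j) (QV b) \<longleftrightarrow> (b \<in> Q \<and> j \<in> Ix n \<and> b \<in> S j)"
  "snd (G_hyp Q S n) (SV' j) (SV l) \<longleftrightarrow> (l \<in> Ix n \<and> j \<in> Ix n)"
  "snd (G_hyp Q S n) (SV' j) (SV' l) \<longleftrightarrow> False"
  "snd (G_hyp Q S n) (SV' j) (T1) \<longleftrightarrow> False"
  "snd (G_hyp Q S n) (SV' j) (T2) \<longleftrightarrow> (j \<in> Ix n)"
  "snd (G_hyp Q S n) (T1) (QV b) \<longleftrightarrow> False"
  "snd (G_hyp Q S n) (T1) (SV l) \<longleftrightarrow> (l \<in> Ix n)"
  "snd (G_hyp Q S n) (T1) (SV' l) \<longleftrightarrow> False"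
  "snd (G_hyp Q S n) (T1) (T1) \<longleftrightarrow> False"
  "snd (G_hyp Q S n) (T1) (T2) \<longleftrightarrow> False"
  "snd (G_hyp Q S n) (T2) (QV b) \<longleftrightarrow> False"
  "snd (G_hyp Q S n) (T2) (SV l) \<longleftrightarrow> False"
  "snd (G_hyp Q S n) (T2) (SV' l) \<longleftrightarrow> (l \<in> Ix n)"
  "snd (G_hyp Q S n) (T2) (T1) \<longleftrightarrow> False"
  "snd (G_hyp Q S n) (T2) (T2) \<longleftrightarrow> False"
  by (auto simp: G_hyp_def GH_base_def Ix_def)

lemma mem_simps:
  "QV a \<in> fst (G_hyp Q S n) \<longleftrightarrow> a \<in> Q"
  "SV j \<in> fst (G_hyp Q S n) \<longleftrightarrow> j \<in> Ix n"
  "SV' j \<in> fst (G_hyp Q S n) \<longleftrightarrow> j \<in> Ix n"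
  "T1 \<in> fst (G_hyp Q S n)"
  "T2 \<in> fst (G_hyp Q S n)"
  by (auto simp: G_hyp_def Ix_def)

definition isQ :: "'a vtx \<Rightarrow> bool" where "isQ x = (case x of QV _ \<Rightarrow> True | _ \<Rightarrow> False)"

lemma lemB:
  fixes Q :: "'a set" and S :: "nat \<Rightarrow> 'a set" and n :: nat
  assumes "x1\<in>fst (G_hyp Q S n)" "x2\<in>fst (G_hyp Q S n)" "y1\<in>fst (G_hyp Q S n)" "y2\<in>fst (G_hyp Q S n)"
    "snd (G_hyp Q S n) x1 x2" "snd (G_hyp Q S n) y1 y2"
    "\<not>snd (G_hyp Q S n) x1 y1" "\<not>snd (G_hyp Q S n) x1 y2" "\<not>snd (G_hyp Q S n) x2 y1" "\<not>snd (G_hyp Q S n) x2 y2"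
    "distinct [x1,x2,y1,y2]"
  shows "(isQ x1 \<and> isQ x2) \<or> (isQ y1 \<and> isQ y2)"
  using assms
  by (cases x1; cases x2; (simp add: adj_simps mem_simps isQ_def)?; cases y1; cases y2; simp add: adj_simps mem_simps isQ_def)


lemma E_sym: "snd (G_hyp Q S n) x y = snd (G_hyp Q S n) y x"
  by (auto simp: G_hyp_def)

lemma lemC:
  assumes "x\<in>fst (G_hyp Q S n)" "y\<in>fst (G_hyp Q S n)" "isQ x" "isQ y" "x \<noteq> y"
  shows "snd (G_hyp Q S n) x y"
  using assms
  by (cases x; cases y) (simp_all add: adj_simps mem_simps isQ_def)

lemma lemD:
  assumes "i1\<in>fst (G_hyp Q S n)" "i2\<in>fst (G_hyp Q S n)" "c\<in>fst (G_hyp Q S n)" "d\<in>fst (G_hyp Q S n)" "QV a \<in> fst (G_hyp Q S n)" "snd (G_hyp Q S n) c d"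
    "\<not>snd (G_hyp Q S n) i1 c" "\<not>snd (G_hyp Q S n) i1 d" "\<not>snd (G_hyp Q S n) i2 c" "\<not>snd (G_hyp Q S n) i2 d" "\<not>snd (G_hyp Q S n) i1 (QV a)" "\<not>snd (G_hyp Q S n) i2 (QV a)" "\<not>snd (G_hyp Q S n) (QV a) c" "\<not>snd (G_hyp Q S n) (QV a) d"
    "distinct [i1,i2,c,d,QV a]"
  shows False
  using assms
  by (cases c; cases d; (simp add: adj_simps mem_simps)?; cases i1; cases i2; simp add: adj_simps mem_simps)


lemma core3P2:
  assumes "x1\<in>fst (G_hyp Q S n)" "x2\<in>fst (G_hyp Q S n)" "x3\<in>fst (G_hyp Q S n)"
    "x4\<in>fst (G_hyp Q S n)" "x5\<in>fst (G_hyp Q S n)" "x6\<in>fst (G_hyp Q S n)"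
    "distinct [x1,x2,x3,x4,x5,x6]"
    "snd (G_hyp Q S n) x1 x2" "snd (G_hyp Q S n) x3 x4" "snd (G_hyp Q S n) x5 x6"
    "\<not>snd (G_hyp Q S n) x1 x3" "\<not>snd (G_hyp Q S n) x1 x4" "\<not>snd (G_hyp Q S n) x2 x3" "\<not>snd (G_hyp Q S n) x2 x4"
    "\<not>snd (G_hyp Q S n) x1 x5" "\<not>snd (G_hyp Q S n) x1 x6" "\<not>snd (G_hyp Q S n) x2 x5" "\<not>snd (G_hyp Q S n) x2 x6"
    "\<not>snd (G_hyp Q S n) x3 x5" "\<not>snd (G_hyp Q S n) x3 x6" "\<not>snd (G_hyp Q S n) x4 x5" "\<not>snd (G_hyp Q S n) x4 x6"
  shows False
proof -
  have b12: "(isQ x1 \<and> isQ x2) \<or> (isQ x3 \<and> isQ x4)" by (rule lemB) (use assms in auto)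
  have b13: "(isQ x1 \<and> isQ x2) \<or> (isQ x5 \<and> isQ x6)" by (rule lemB) (use assms in auto)
  have b23: "(isQ x3 \<and> isQ x4) \<or> (isQ x5 \<and> isQ x6)" by (rule lemB) (use assms in auto)
  show False
  proof (cases "isQ x1 \<and> isQ x2")
    case True
    then show ?thesis
    proof (cases "isQ x3")
      case True
      with \<open>isQ x1 \<and> isQ x2\<close> show ?thesis using lemC[of x1 Q S n x3] assms by auto
    next
      case False
      with b23 have "isQ x5" by auto
      with \<open>isQ x1 \<and> isQ x2\<close> show ?thesis using lemC[of x1 Q S n x5] assms by auto
    qed
  next
    case False
    with b12 b13 have "isQ x3" "isQ x5" by auto
    then show ?thesis using lemC[of x3 Q S n x5] assms by auto
  qed
qed

lemma core2P3:
  assumes "x1\<in>fst (G_hyp Q S n)" "x2\<in>fst (G_hyp Q S n)" "x3\<in>fst (G_hyp Q S n)"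
    "x4\<in>fst (G_hyp Q S n)" "x5\<in>fst (G_hyp Q S n)" "x6\<in>fst (G_hyp Q S n)"
    "distinct [x1,x2,x3,x4,x5,x6]"
    "snd (G_hyp Q S n) x1 x2" "snd (G_hyp Q S n) x2 x3" "snd (G_hyp Q S n) x4 x5" "snd (G_hyp Q S n) x5 x6"
    "\<not>snd (G_hyp Q S n) x1 x3" "\<not>snd (G_hyp Q S n) x4 x6"
    "\<not>snd (G_hyp Q S n) x1 x4" "\<not>snd (G_hyp Q S n) x1 x5" "\<not>snd (G_hyp Q S n) x1 x6"
    "\<not>snd (G_hyp Q S n) x2 x4" "\<not>snd (G_hyp Q S n) x2 x5" "\<not>snd (G_hyp Q S n) x2 x6"
    "\<not>snd (G_hyp Q S n) x3 x4" "\<not>snd (G_hyp Q S n) x3 x5" "\<not>snd (G_hyp Q S n) x3 x6"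
  shows False
proof -
  have a: "(isQ x1 \<and> isQ x2) \<or> (isQ x4 \<and> isQ x5)" by (rule lemB) (use assms in auto)
  have b: "(isQ x2 \<and> isQ x3) \<or> (isQ x5 \<and> isQ x6)" by (rule lemB) (use assms in auto)
  have c: "(isQ x1 \<and> isQ x2) \<or> (isQ x5 \<and> isQ x6)" by (rule lemB) (use assms in auto)
  have d: "(isQ x2 \<and> isQ x3) \<or> (isQ x4 \<and> isQ x5)" by (rule lemB) (use assms in auto)
  have n13: "\<not> (isQ x1 \<and> isQ x3)" using lemC[of x1 Q S n x3] assms by auto
  have n46: "\<not> (isQ x4 \<and> isQ x6)" using lemC[of x4 Q S n x6] assms by auto
  have n14: "\<not> (isQ x1 \<and> isQ x4)" using lemC[of x1 Q S n x4] assms by auto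
  have n25: "\<not> (isQ x2 \<and> isQ x5)" using lemC[of x2 Q S n x5] assms by auto
  show False using a b c d n13 n46 n14 n25 by blast
qed

lemma core2P12P2:
  assumes "i1\<in>fst (G_hyp Q S n)" "i2\<in>fst (G_hyp Q S n)" "x1\<in>fst (G_hyp Q S n)"
    "x2\<in>fst (G_hyp Q S n)" "x3\<in>fst (G_hyp Q S n)" "x4\<in>fst (G_hyp Q S n)"
    "distinct [i1,i2,x1,x2,x3,x4]"
    "snd (G_hyp Q S n) x1 x2" "snd (G_hyp Q S n) x3 x4"
    "\<not>snd (G_hyp Q S n) i1 i2"
    "\<not>snd (G_hyp Q S n) i1 x1" "\<not>snd (G_hyp Q S n) i1 x2" "\<not>snd (G_hyp Q S n) i1 x3" "\<not>snd (G_hyp Q S n) i1 x4"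
    "\<not>snd (G_hyp Q S n) i2 x1" "\<not>snd (G_hyp Q S n) i2 x2" "\<not>snd (G_hyp Q S n) i2 x3" "\<not>snd (G_hyp Q S n) i2 x4"
    "\<not>snd (G_hyp Q S n) x1 x3" "\<not>snd (G_hyp Q S n) x1 x4" "\<not>snd (G_hyp Q S n) x2 x3" "\<not>snd (G_hyp Q S n) x2 x4"
  shows False
proof -
  have b: "(isQ x1 \<and> isQ x2) \<or> (isQ x3 \<and> isQ x4)" by (rule lemB) (use assms in auto)
  then show False
  proof
    assume "isQ x1 \<and> isQ x2"
    then obtain a where a: "x1 = QV a" by (cases x1) (auto simp: isQ_def)
    have dd: "distinct [i1,i2,x3,x4,QV a]" using assms(7) a by auto
    show False
      by (rule lemD[of i1 Q S n i2 x3 x4 a]) (use assms a dd in simp_all)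
  next
    assume "isQ x3 \<and> isQ x4"
    then obtain a where a: "x3 = QV a" by (cases x3) (auto simp: isQ_def)
    show False
    proof -
      have dd: "distinct [i1,i2,x1,x2,QV a]" using assms(7) a by auto
      have s: "\<not>snd (G_hyp Q S n) x3 x1" "\<not>snd (G_hyp Q S n) x3 x2"
        using assms(19,21) by (simp_all add: E_sym[of Q S n x3])
      show False
        by (rule lemD[of i1 Q S n i2 x1 x2 a]) (use assms a s dd in simp_all)
    qed
  qed
qed

lemma fst_gunion[simp]: "fst (gunion G H) = Inl ` fst G \<union> Inr ` fst H" by (simp add: gunion_def)
lemma snd_gunion[simp]: "snd (gunion G H) (Inl a) (Inl b) = snd G a b"
  "snd (gunion G H) (Inr c) (Inr d) = snd H c d"
  "snd (gunion G H) (Inl a) (Inr d) = False"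
  "snd (gunion G H) (Inr c) (Inl b) = False" by (simp_all add: gunion_def)
lemma fst_path[simp]: "fst (path_graph r) = {0..<r}" by (simp add: path_graph_def)
lemma snd_path[simp]: "snd (path_graph r) i j = (i + 1 = j \<or> j + 1 = i)" by (simp add: path_graph_def)

theorem lemma28:
  fixes Q :: "'a set" and S :: "nat \<Rightarrow> 'a set" and n :: nat
  assumes "finite Q" and "n \<ge> 1"
    and "\<forall>j\<in>{1..n}. S j \<subseteq> Q \<and> S j \<noteq> {}"
    and "S n = Q"
  shows "H_free (gunion (gunion (path_graph 1) (path_graph 1))
                        (gunion (path_graph 2) (path_graph 2))) (G_hyp Q S n)
       \<and> H_free (gunion (path_graph 2) (gunion (path_graph 2) (path_graph 2))) (G_hyp Q S n)
       \<and> H_free (gunion (path_graph 3) (path_graph 3)) (G_hyp Q S n)"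
proof (intro conjI)
  show "H_free (gunion (gunion (path_graph 1) (path_graph 1))
                        (gunion (path_graph 2) (path_graph 2))) (G_hyp Q S n)"
    unfolding H_free_def
  proof
    let ?H = "gunion (gunion (path_graph 1) (path_graph 1)) (gunion (path_graph 2) (path_graph 2))"
    assume h: "has_induced (G_hyp Q S n) ?H"
    obtain f where inj: "inj_on f (fst ?H)" and mem0: "f ` fst ?H \<subseteq> fst (G_hyp Q S n)"
      and iso0: "\<forall>u\<in>fst ?H. \<forall>v\<in>fst ?H. u \<noteq> v \<longrightarrow> (snd ?H u v \<longleftrightarrow> snd (G_hyp Q S n) (f u) (f v))"
      using h unfolding has_induced_def by blast
    have mem: "\<And>u. u \<in> fst ?H \<Longrightarrow> f u \<in> fst (G_hyp Q S n)" using mem0 by blast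
    have iso: "\<And>u v. u\<in>fst ?H \<Longrightarrow> v\<in>fst ?H \<Longrightarrow> u\<noteq>v \<Longrightarrow> snd (G_hyp Q S n) (f u) (f v) = snd ?H u v"
      using iso0 by blast
    show False
      by (rule core2P12P2[of "f (Inl (Inl 0))" Q S n "f (Inl (Inr 0))" "f (Inr (Inl 0))" "f (Inr (Inl 1))"
          "f (Inr (Inr 0))" "f (Inr (Inr 1))"])
        (simp_all add: mem iso inj_on_eq_iff[OF inj])
  qed
next
  show "H_free (gunion (path_graph 2) (gunion (path_graph 2) (path_graph 2))) (G_hyp Q S n)"
    unfolding H_free_def
  proof
    let ?H = "gunion (path_graph 2) (gunion (path_graph 2) (path_graph 2))"
    assume h: "has_induced (G_hyp Q S n) ?H"
    obtain f where inj: "inj_on f (fst ?H)" and mem0: "f ` fst ?H \<subseteq> fst (G_hyp Q S n)"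
      and iso0: "\<forall>u\<in>fst ?H. \<forall>v\<in>fst ?H. u \<noteq> v \<longrightarrow> (snd ?H u v \<longleftrightarrow> snd (G_hyp Q S n) (f u) (f v))"
      using h unfolding has_induced_def by blast
    have mem: "\<And>u. u \<in> fst ?H \<Longrightarrow> f u \<in> fst (G_hyp Q S n)" using mem0 by blast
    have iso: "\<And>u v. u\<in>fst ?H \<Longrightarrow> v\<in>fst ?H \<Longrightarrow> u\<noteq>v \<Longrightarrow> snd (G_hyp Q S n) (f u) (f v) = snd ?H u v"
      using iso0 by blast
    show False
      by (rule core3P2[of "f (Inl 0)" Q S n "f (Inl 1)" "f (Inr (Inl 0))" "f (Inr (Inl 1))"
          "f (Inr (Inr 0))" "f (Inr (Inr 1))"])
        (simp_all add: mem iso inj_on_eq_iff[OF inj])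
  qed
next
  show "H_free (gunion (path_graph 3) (path_graph 3)) (G_hyp Q S n)"
    unfolding H_free_def
  proof
    let ?H = "gunion (path_graph 3) (path_graph 3)"
    assume h: "has_induced (G_hyp Q S n) ?H"
    obtain f where inj: "inj_on f (fst ?H)" and mem0: "f ` fst ?H \<subseteq> fst (G_hyp Q S n)"
      and iso0: "\<forall>u\<in>fst ?H. \<forall>v\<in>fst ?H. u \<noteq> v \<longrightarrow> (snd ?H u v \<longleftrightarrow> snd (G_hyp Q S n) (f u) (f v))"
      using h unfolding has_induced_def by blast
    have mem: "\<And>u. u \<in> fst ?H \<Longrightarrow> f u \<in> fst (G_hyp Q S n)" using mem0 by blast
    have iso: "\<And>u v. u\<in>fst ?H \<Longrightarrow> v\<in>fst ?H \<Longrightarrow> u\<noteq>v \<Longrightarrow> snd (G_hyp Q S n) (f u) (f v) = snd ?H u v"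
      using iso0 by blast
    show False
      by (rule core2P3[of "f (Inl 0)" Q S n "f (Inl 1)" "f (Inl 2)" "f (Inr 0)" "f (Inr 1)" "f (Inr 2)"])
        (simp_all add: mem iso inj_on_eq_iff[OF inj])
  qed
qed

end
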